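(* For any $n\times n$ completely positive semidefinite matrix $X$ and any $m\times m$ completely positive semidefinite matrix $Y$, the block-diagonal matrix $X\oplus Y=\begin{pmatrix}X&0\\0&Y\end{pmatrix}$ is completely positive semidefinite and $$\mathrm{cpsd}\text{-}\mathrm{rank}(X\oplus Y)=\mathrm{cpsd}\text{-}\mathrm{rank}(X)+\mathrm{cpsd}\text{-}\mathrm{rank}(Y).$$
   Context: An $n\times n$ matrix $X$ is completely positive semidefinite (cpsd) if there exist $d\ge1$ and Hermitian positive semidefinite $d\times d$ matrices $P_1,\dots,P_n$ with $X_{ij}=\mathrm{Tr}(P_iP_j)$ for all $i,j$; the cpsd-rank of $X$ is the least such $d$. *)

theory Defs
  imports "Jordan_Normal_Form.Matrix"
begin

definition hermitian_mat :: "complex mat \<Rightarrow> bool" where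
  "hermitian_mat P \<longleftrightarrow> dim_row P = dim_col P \<and>
     (\<forall>i < dim_row P. \<forall>j < dim_row P. P $$ (i, j) = cnj (P $$ (j, i)))"

definition psd_mat :: "complex mat \<Rightarrow> bool" where
  "psd_mat P \<longleftrightarrow> hermitian_mat P \<and>
     (\<forall>v \<in> carrier_vec (dim_row P).
        0 \<le> Re (\<Sum>i < dim_row P. \<Sum>j < dim_row P. cnj (v $ i) * P $$ (i, j) * v $ j))"

definition mat_trace :: "'a :: comm_ring_1 mat \<Rightarrow> 'a" where
  "mat_trace A = (\<Sum>i < dim_row A. A $$ (i, i))"

definition cpsd_factorizable :: "nat \<Rightarrow> real mat \<Rightarrow> bool" where
  "cpsd_factorizable d X \<longleftrightarrow>
     (\<exists>P :: nat \<Rightarrow> complex mat.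
        (\<forall>i < dim_row X. P i \<in> carrier_mat d d \<and> psd_mat (P i)) \<and>
        (\<forall>i < dim_row X. \<forall>j < dim_row X.
            complex_of_real (X $$ (i, j)) = mat_trace (P i * P j)))"

definition cpsd :: "real mat \<Rightarrow> bool" where
  "cpsd X \<longleftrightarrow> dim_row X = dim_col X \<and> (\<exists>d \<ge> 1. cpsd_factorizable d X)"

definition cpsd_rank :: "real mat \<Rightarrow> nat" where
  "cpsd_rank X = (LEAST d. d \<ge> 1 \<and> cpsd_factorizable d X)"

end

theory Submission
  imports Defs "Jordan_Normal_Form.Spectral_Radius" "Jordan_Normal_Form.Schur_Decomposition"
begin

definition adj :: "complex mat \<Rightarrow> complex mat" where
  "adj A = mat (dim_col A) (dim_row A) (\<lambda>(i,j). cnj (A $$ (j,i)))"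

lemma adj_dims[simp]: "dim_row (adj A) = dim_col A" "dim_col (adj A) = dim_row A"
  by (auto simp: adj_def)
lemma adj_carrier_mat[simp]: "A \<in> carrier_mat r c \<Longrightarrow> adj A \<in> carrier_mat c r"
  by (auto simp: adj_def)
lemma adj_index[simp]: "i < dim_col A \<Longrightarrow> j < dim_row A \<Longrightarrow> adj A $$ (i,j) = cnj (A $$ (j,i))"
  by (auto simp: adj_def)
lemma adj_adj[simp]: "adj (adj A) = A"
  by (intro eq_matI) (auto simp: adj_def)
lemma adj_mult: assumes "A \<in> carrier_mat r k" "B \<in> carrier_mat k c"
  shows "adj (A * B) = adj B * adj A"
  using assms by (intro eq_matI) (auto simp: adj_def scalar_prod_def cnj_sum mult.commute)

lemma hermitian_adj: assumes "hermitian_mat H" shows "adj H = H"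
proof -
  have d: "dim_row H = dim_col H" and
    h: "\<And>i j. i < dim_row H \<Longrightarrow> j < dim_row H \<Longrightarrow> H $$ (i,j) = cnj (H $$ (j,i))"
    using assms unfolding hermitian_mat_def by blast+
  show ?thesis
  proof (rule eq_matI)
    fix i j assume i: "i < dim_row H" and j: "j < dim_col H"
    show "adj H $$ (i,j) = H $$ (i,j)" using h[of i j] d i j by (simp add: adj_def)
  qed (use d in auto)
qed

lemma adj_hermitian: "H \<in> carrier_mat n n \<Longrightarrow> adj H = H \<Longrightarrow> hermitian_mat H"
  unfolding hermitian_mat_def by (metis adj_index carrier_matD)

lemma cdot_self: "(w :: complex vec) \<bullet>c w = of_real (\<Sum>i\<in>{0..<dim_vec w}. (cmod (w$i))^2)"
proof -
  have "w \<bullet>c w = (\<Sum>i\<in>{0..<dim_vec w}. w$i * cnj (w$i))" by (simp add: scalar_prod_def)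
  also have "\<dots> = (\<Sum>i\<in>{0..<dim_vec w}. of_real ((cmod (w$i))^2))"
    by (intro sum.cong refl) (simp only: complex_norm_square)
  also have "\<dots> = of_real (\<Sum>i\<in>{0..<dim_vec w}. (cmod (w$i))^2)" by (simp only: of_real_sum)
  finally show ?thesis .
qed

lemma orthonormal_completion:
  fixes v :: "complex vec"
  assumes v: "v \<in> carrier_vec n" and v0: "v \<noteq> 0\<^sub>v n"
  shows "\<exists>W c. W \<in> carrier_mat n n \<and> adj W * W = 1\<^sub>m n \<and> col W 0 = c \<cdot>\<^sub>v v"
proof -
  interpret cof_vec_space n "TYPE(complex)" .
  define b where "b = basis_completion v"
  from basis_completion[OF v v0, folded b_def]
  have dist_b: "distinct b" and indep: "\<not> lin_dep (set b)" and bc: "set b \<subseteq> carrier_vec n"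
    and hdb: "hd b = v" and len_b: "length b = n" by auto
  have n: "n > 0" using v0 v by (cases n) auto
  from hdb len_b n obtain vs where bv: "b = v # vs" by (cases b, auto)
  define ws where "ws = gram_schmidt n b"
  from gram_schmidt_result[OF bc dist_b indep ws_def]
  have ws: "set ws \<subseteq> carrier_vec n" "corthogonal ws" "length ws = n" by (auto simp: len_b)
  have hdws: "hd ws = v" using gram_schmidt_hd[OF v, of vs] bv ws_def by simp
  have ws0: "ws ! 0 = v" using hdws ws(3) n by (cases ws) auto
  define s where "s w = (\<Sum>i\<in>{0..<dim_vec w}. (cmod (w$i))^2)" for w :: "complex vec"
  define nr where "nr w = complex_of_real (1 / sqrt (s w))" for w :: "complex vec"
  define us where "us = map (\<lambda>w. nr w \<cdot>\<^sub>v w) ws"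
  define W where "W = mat_of_cols n us"
  have wsc: "j < n \<Longrightarrow> ws ! j \<in> carrier_vec n" for j using ws by auto
  have usc: "j < n \<Longrightarrow> us ! j \<in> carrier_vec n" for j using wsc ws(3) by (auto simp: us_def)
  have Wc: "W \<in> carrier_mat n n" using ws(3) by (auto simp: W_def us_def)
  have Wi: "W $$ (l, j) = nr (ws!j) * (ws!j $ l)" if "l < n" "j < n" for l j
    using that ws(3) wsc[OF that(2)] by (auto simp: W_def us_def mat_of_cols_index)
  have spos: "s (ws!j) > 0" if "j < n" for j
  proof -
    have "ws ! j \<bullet>c ws ! j \<noteq> 0" using corthogonalD[OF ws(2), of j j] ws(3) that by simp
    moreover have "ws!j \<bullet>c ws!j = of_real (s (ws!j))" by (simp only: cdot_self s_def)
    ultimately have "s (ws!j) \<noteq> 0" by auto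
    moreover have "s (ws!j) \<ge> 0" unfolding s_def by (intro sum_nonneg) auto
    ultimately show ?thesis by auto
  qed
  have AW: "(adj W * W) $$ (i,j) = nr (ws!i) * nr (ws!j) * (ws!j \<bullet>c ws!i)" if "i < n" "j < n" for i j
  proof -
    have "(adj W * W) $$ (i,j) = (\<Sum>l\<in>{0..<n}. cnj (W $$ (l,i)) * W $$ (l,j))"
      using that Wc by (auto simp: scalar_prod_def)
    also have "\<dots> = (\<Sum>l\<in>{0..<n}. nr (ws!i) * nr (ws!j) * ((ws!j) $ l * cnj ((ws!i) $ l)))"
      by (intro sum.cong refl, simp add: Wi that nr_def)
    also have "\<dots> = nr (ws!i) * nr (ws!j) * (ws!j \<bullet>c ws!i)"
      using wsc[OF that(1)] by (simp add: scalar_prod_def sum_distrib_left)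
    finally show ?thesis .
  qed
  have WW: "adj W * W = 1\<^sub>m n"
  proof (intro eq_matI)
    fix i j assume i: "i < dim_row (1\<^sub>m n)" and j: "j < dim_col (1\<^sub>m n)"
    then have i: "i < n" and j: "j < n" by auto
    show "(adj W * W) $$ (i,j) = 1\<^sub>m n $$ (i,j)"
    proof (cases "i = j")
      case True
      have sp: "s (ws!j) > 0" using spos j .
      have "(adj W * W) $$ (i,j) = nr (ws!j) * nr (ws!j) * of_real (s (ws!j))"
        using AW[OF i j] True by (simp add: cdot_self s_def)
      also have "\<dots> = of_real ((1 / sqrt (s (ws!j))) * (1 / sqrt (s (ws!j))) * s (ws!j))"
        by (simp only: nr_def of_real_mult)
      also have "\<dots> = 1"
      proof -
        have q: "sqrt (s (ws!j)) * sqrt (s (ws!j)) = s (ws!j)" using sp by simp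
        have "(1 / sqrt (s (ws!j))) * (1 / sqrt (s (ws!j))) * s (ws!j) = s (ws!j) / (sqrt (s (ws!j)) * sqrt (s (ws!j)))"
          by simp
        also have "\<dots> = 1" unfolding q using sp by simp
        finally show ?thesis by simp
      qed
      finally show ?thesis using True i by simp
    next
      case False
      have "ws!j \<bullet>c ws!i = 0" using corthogonalD[OF ws(2), of j i] ws(3) i j False by simp
      then show ?thesis using AW[OF i j] False i j by simp
    qed
  qed (use Wc in auto)
  have cW: "col W 0 = nr v \<cdot>\<^sub>v v"
    using n ws(3) ws0 wsc[OF n] by (simp add: W_def us_def)
  show ?thesis by (intro exI[of _ W] exI[of _ "nr v"] conjI Wc WW cW)
qed

lemma smult_eigen:
  fixes H :: "complex mat"
  assumes H: "H \<in> carrier_mat n n" and v: "v \<in> carrier_vec n" and ev: "H *\<^sub>v v = e \<cdot>\<^sub>v v"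
  shows "H *\<^sub>v (c \<cdot>\<^sub>v v) = e \<cdot>\<^sub>v (c \<cdot>\<^sub>v v)"
proof -
  have "H *\<^sub>v (c \<cdot>\<^sub>v v) = c \<cdot>\<^sub>v (H *\<^sub>v v)" using mult_mat_vec[OF H v] .
  also have "\<dots> = e \<cdot>\<^sub>v (c \<cdot>\<^sub>v v)" unfolding ev by (intro eq_vecI) auto
  finally show ?thesis .
qed

lemma diag_fb: "M \<in> carrier_mat k k \<Longrightarrow> diagonal_mat M \<Longrightarrow>
  diagonal_mat (four_block_mat (mat 1 1 f) (0\<^sub>m 1 k) (0\<^sub>m k 1) M)"
proof -
  assume M: "M \<in> carrier_mat k k" and dM: "diagonal_mat M"
  show ?thesis unfolding diagonal_mat_def
  proof (intro allI impI)
    fix i j assume i: "i < dim_row (four_block_mat (mat 1 1 f) (0\<^sub>m 1 k) (0\<^sub>m k 1) M)"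
      and j: "j < dim_col (four_block_mat (mat 1 1 f) (0\<^sub>m 1 k) (0\<^sub>m k 1) M)" and ij: "i \<noteq> j"
    have i': "i < Suc k" "j < Suc k" using i j M by auto
    show "four_block_mat (mat 1 1 f) (0\<^sub>m 1 k) (0\<^sub>m k 1) M $$ (i, j) = 0"
    proof (cases "i = 0 \<or> j = 0")
      case True then show ?thesis using i' M ij by auto
    next
      case False
      then have "M $$ (i - 1, j - 1) = 0" using dM M i' ij unfolding diagonal_mat_def by auto
      then show ?thesis using False i' M by simp
    qed
  qed
qed

lemma spectral:
  "H \<in> carrier_mat n n \<Longrightarrow> hermitian_mat H \<Longrightarrow>
   \<exists>U. U \<in> carrier_mat n n \<and> adj U * U = 1\<^sub>m n \<and> U * adj U = 1\<^sub>m n \<and> diagonal_mat (adj U * H * U)"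
proof (induction n arbitrary: H)
  case 0
  then show ?case by (intro exI[of _ "1\<^sub>m 0"]) (auto simp: diagonal_mat_def)
next
  case (Suc k)
  have H: "H \<in> carrier_mat (Suc k) (Suc k)" using Suc by auto
  have hH: "adj H = H" using Suc(3) by (rule hermitian_adj)
  from spectrum_non_empty[OF H] obtain e where "eigenvalue H e" by (auto simp: spectrum_def)
  from find_eigenvector[OF H this] obtain v where v: "v \<in> carrier_vec (Suc k)" "v \<noteq> 0\<^sub>v (Suc k)"
     "H *\<^sub>v v = e \<cdot>\<^sub>v v"
     unfolding eigenvector_def using H by auto
  from orthonormal_completion[OF v(1,2)] obtain W c where W: "W \<in> carrier_mat (Suc k) (Suc k)"
    "adj W * W = 1\<^sub>m (Suc k)" "col W 0 = c \<cdot>\<^sub>v v" by auto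
  have aW: "adj W \<in> carrier_mat (Suc k) (Suc k)" using W by simp
  have WW: "W * adj W = 1\<^sub>m (Suc k)" using mat_mult_left_right_inverse[OF aW W(1) W(2)] .
  have Hw: "H *\<^sub>v col W 0 = e \<cdot>\<^sub>v col W 0" unfolding W(3) by (rule smult_eigen[OF H v(1,3)])
  define H1 where "H1 = adj W * H * W"
  have H1: "H1 \<in> carrier_mat (Suc k) (Suc k)" using W H unfolding H1_def by auto
  have cW: "col W 0 \<in> carrier_vec (Suc k)" using W v(1) by auto
  have "col H1 0 = (adj W * H) *\<^sub>v col W 0" unfolding H1_def
    by (rule col_mult2[of _ "Suc k" "Suc k" _ "Suc k"]) (use aW H W in auto)
  also have "\<dots> = adj W *\<^sub>v (H *\<^sub>v col W 0)" using aW H cW by simp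
  also have "\<dots> = e \<cdot>\<^sub>v (adj W *\<^sub>v col W 0)" unfolding Hw using mult_mat_vec[OF aW cW] .
  also have "adj W *\<^sub>v col W 0 = col (adj W * W) 0"
    by (rule col_mult2[of "adj W" "Suc k" "Suc k" W "Suc k" 0, symmetric]) (use aW W(1) in auto)
  also have "\<dots> = unit_vec (Suc k) 0" unfolding W(2) by simp
  finally have col0: "col H1 0 = e \<cdot>\<^sub>v unit_vec (Suc k) 0" .
  have hH1: "adj H1 = H1"
  proof -
    have "adj H1 = adj (adj W * (H * W))" unfolding H1_def
      by (rule arg_cong[where f=adj], rule assoc_mult_mat[OF aW H W(1)])
    also have "\<dots> = adj (H * W) * adj (adj W)" using aW H W by (intro adj_mult) auto
    also have "\<dots> = (adj W * adj H) * W" using H W by (simp add: adj_mult[of _ "Suc k" "Suc k"])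
    finally show ?thesis unfolding hH H1_def .
  qed
  have H1c0: "H1 $$ (i, 0) = (if i = 0 then e else 0)" if "i < Suc k" for i
  proof -
    have "H1 $$ (i, 0) = col H1 0 $ i" using H1 that by auto
    then show ?thesis unfolding col0 using that by simp
  qed
  have H1sym: "H1 $$ (i, j) = cnj (H1 $$ (j, i))" if "i < Suc k" "j < Suc k" for i j
  proof -
    have "H1 $$ (i,j) = adj H1 $$ (i,j)" using hH1 by simp
    then show ?thesis using that H1 by simp
  qed
  have H1r0: "H1 $$ (0, j) = 0" if "0 < j" "j < Suc k" for j
    using H1sym[of 0 j] H1c0[of j] that by simp
  define A3 where "A3 = mat k k (\<lambda>(i,j). H1 $$ (Suc i, Suc j))"
  have A3: "A3 \<in> carrier_mat k k" unfolding A3_def by simp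
  have hA3: "hermitian_mat A3" unfolding hermitian_mat_def A3_def by (auto intro!: H1sym)
  from Suc.IH[OF A3 hA3] obtain U2 where U2: "U2 \<in> carrier_mat k k" "adj U2 * U2 = 1\<^sub>m k"
    "U2 * adj U2 = 1\<^sub>m k" "diagonal_mat (adj U2 * A3 * U2)" by auto
  define a where "a = H1 $$ (0,0)"
  have H1b: "H1 = four_block_mat (mat 1 1 (\<lambda>_. a)) (0\<^sub>m 1 k) (0\<^sub>m k 1) A3"
  proof (rule eq_matI)
    fix i j assume ij: "i < dim_row (four_block_mat (mat 1 1 (\<lambda>_. a)) (0\<^sub>m 1 k) (0\<^sub>m k 1) A3)"
      "j < dim_col (four_block_mat (mat 1 1 (\<lambda>_. a)) (0\<^sub>m 1 k) (0\<^sub>m k 1) A3)"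
    then have i: "i < Suc k" and j: "j < Suc k" using A3 by auto
    show "H1 $$ (i, j) = four_block_mat (mat 1 1 (\<lambda>_. a)) (0\<^sub>m 1 k) (0\<^sub>m k 1) A3 $$ (i, j)"
      using i j A3 H1c0[OF i] H1r0[OF _ j] unfolding a_def A3_def
      by (cases i; cases j) auto
  qed (use H1 A3 in auto)
  define V where "V = four_block_mat (1\<^sub>m 1) (0\<^sub>m 1 k) (0\<^sub>m k 1) U2"
  have V: "V \<in> carrier_mat (Suc k) (Suc k)" using U2 by (auto simp: V_def)
  have aV: "adj V = four_block_mat (1\<^sub>m 1) (0\<^sub>m 1 k) (0\<^sub>m k 1) (adj U2)"
    by (rule eq_matI) (use U2 in \<open>auto simp: V_def\<close>)
  have aU2: "adj U2 \<in> carrier_mat k k" using U2 by simp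
  have one: "four_block_mat (1\<^sub>m 1) (0\<^sub>m 1 k) (0\<^sub>m k 1) (1\<^sub>m k) = (1\<^sub>m (Suc k) :: complex mat)"
    by (rule eq_matI) auto
  note c1 = one_carrier_mat[of 1] and c2 = zero_carrier_mat[of 1 k] and c3 = zero_carrier_mat[of k 1]
  have VV: "adj V * V = 1\<^sub>m (Suc k)"
    unfolding aV unfolding V_def
    by (subst mult_four_block_mat[OF c1 c2 c3 aU2 c1 c2 c3 U2(1)])
      (use U2 aU2 in \<open>simp add: U2(2) one\<close>)
  have VV2: "V * adj V = 1\<^sub>m (Suc k)"
    unfolding aV unfolding V_def
    by (subst mult_four_block_mat[OF c1 c2 c3 U2(1) c1 c2 c3 aU2])
      (use U2 aU2 in \<open>simp add: U2(3) one\<close>)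
  have cA: "mat 1 1 (\<lambda>_. a) \<in> carrier_mat 1 1" by simp
  have aA3: "adj U2 * A3 \<in> carrier_mat k k" using aU2 A3 by simp
  have E1: "adj V * H1 = four_block_mat (mat 1 1 (\<lambda>_. a)) (0\<^sub>m 1 k) (0\<^sub>m k 1) (adj U2 * A3)"
    unfolding aV H1b
    by (subst mult_four_block_mat[OF c1 c2 c3 aU2 cA c2 c3 A3]) (use U2 aU2 A3 aA3 in simp)
  have D: "adj V * H1 * V = four_block_mat (mat 1 1 (\<lambda>_. a)) (0\<^sub>m 1 k) (0\<^sub>m k 1) (adj U2 * A3 * U2)"
    unfolding E1 unfolding V_def
    by (subst mult_four_block_mat[OF cA c2 c3 aA3 c1 c2 c3 U2(1)]) (use U2 aU2 A3 aA3 in simp)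
  define U where "U = W * V"
  have U: "U \<in> carrier_mat (Suc k) (Suc k)" using W V by (simp add: U_def)
  have aUe: "adj U = adj V * adj W" unfolding U_def by (rule adj_mult[OF W(1) V])
  have aVc: "adj V \<in> carrier_mat (Suc k) (Suc k)" using V by simp
  have WV: "W * V \<in> carrier_mat (Suc k) (Suc k)" using W(1) V by simp
  have "adj U * U = (adj V * adj W) * (W * V)" unfolding aUe by (simp only: U_def)
  also have "\<dots> = adj V * (adj W * (W * V))" by (rule assoc_mult_mat[OF aVc aW WV])
  also have "adj W * (W * V) = (adj W * W) * V" by (rule assoc_mult_mat[OF aW W(1) V, symmetric])
  also have "\<dots> = V" using V by (simp add: W(2))
  finally have UU: "adj U * U = 1\<^sub>m (Suc k)" using VV by simp
  have aWV: "adj V * adj W \<in> carrier_mat (Suc k) (Suc k)" using aVc aW by simp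
  have "U * adj U = (W * V) * (adj V * adj W)" unfolding aUe by (simp only: U_def)
  also have "\<dots> = W * (V * (adj V * adj W))" by (rule assoc_mult_mat[OF W(1) V aWV])
  also have "V * (adj V * adj W) = (V * adj V) * adj W" by (rule assoc_mult_mat[OF V aVc aW, symmetric])
  also have "\<dots> = adj W" by (simp add: VV2 left_mult_one_mat[OF aW])
  finally have UU2: "U * adj U = 1\<^sub>m (Suc k)" using WW by simp
  have aWH: "adj W * H \<in> carrier_mat (Suc k) (Suc k)" using H aW by simp
  have "adj U * H * U = ((adj V * adj W) * H) * (W * V)" unfolding aUe by (simp only: U_def)
  also have "\<dots> = (adj V * (adj W * H)) * (W * V)" using assoc_mult_mat[OF aVc aW H] by simp
  also have "\<dots> = adj V * ((adj W * H) * (W * V))"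
    by (rule assoc_mult_mat[OF aVc aWH WV])
  also have "(adj W * H) * (W * V) = ((adj W * H) * W) * V"
    by (rule assoc_mult_mat[OF aWH W(1) V, symmetric])
  also have "\<dots> = H1 * V" unfolding H1_def ..
  also have "adj V * (H1 * V) = adj V * H1 * V" by (rule assoc_mult_mat[OF aVc H1 V, symmetric])
  finally have eq: "adj U * H * U = adj V * H1 * V" .
  have "diagonal_mat (adj V * H1 * V)" unfolding D
    by (rule diag_fb[OF mult_carrier_mat[OF aA3 U2(1)] U2(4)])
  then have dg: "diagonal_mat (adj U * H * U)" unfolding eq .
  show ?case by (rule exI[of _ U], intro conjI, fact U, fact UU, fact UU2, fact dg)
qed


definition qf :: "complex mat \<Rightarrow> complex vec \<Rightarrow> complex" where
  "qf P v = (\<Sum>i<dim_row P. \<Sum>j<dim_row P. cnj (v $ i) * P $$ (i, j) * v $ j)"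

lemma psd_qf: "psd_mat P \<longleftrightarrow> hermitian_mat P \<and> (\<forall>v \<in> carrier_vec (dim_row P). 0 \<le> Re (qf P v))"
  unfolding psd_mat_def qf_def ..

lemma qf_alt: assumes "P \<in> carrier_mat d d" "v \<in> carrier_vec d"
  shows "qf P v = conjugate v \<bullet> (P *\<^sub>v v)"
  using assms by (simp add: qf_def scalar_prod_def sum_distrib_left mult.assoc atLeast0LessThan)

lemma adj_move: assumes U: "U \<in> carrier_mat d k" and v: "v \<in> carrier_vec k" and w: "w \<in> carrier_vec d"
  shows "conjugate v \<bullet> (adj U *\<^sub>v w) = conjugate (U *\<^sub>v v) \<bullet> w"
proof -
  have "conjugate v \<bullet> (adj U *\<^sub>v w) = (\<Sum>i<k. cnj (v $ i) * (\<Sum>p<d. cnj (U $$ (p, i)) * w $ p))"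
    using assms by (simp add: scalar_prod_def atLeast0LessThan)
  also have "\<dots> = (\<Sum>i<k. \<Sum>p<d. cnj (U $$ (p, i)) * cnj (v $ i) * w $ p)"
    by (simp add: sum_distrib_left mult_ac)
  also have "\<dots> = (\<Sum>p<d. \<Sum>i<k. cnj (U $$ (p, i)) * cnj (v $ i) * w $ p)"
    by (rule sum.swap)
  also have "\<dots> = (\<Sum>p<d. cnj (\<Sum>i<k. U $$ (p, i) * v $ i) * w $ p)"
    by (simp add: sum_distrib_right cnj_sum)
  also have "\<dots> = conjugate (U *\<^sub>v v) \<bullet> w"
    using assms by (simp add: scalar_prod_def atLeast0LessThan)
  finally show ?thesis .
qed

lemma conj_entry: assumes U: "U \<in> carrier_mat d k" and M: "M \<in> carrier_mat d d"
  and i: "i < k" and j: "j < k"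
  shows "(adj U * M * U) $$ (i, j) = (\<Sum>p<d. \<Sum>l<d. cnj (U $$ (p, i)) * M $$ (p, l) * U $$ (l, j))"
proof -
  have "(adj U * M * U) $$ (i, j) = (\<Sum>l<d. (\<Sum>p<d. cnj (U $$ (p, i)) * M $$ (p, l)) * U $$ (l, j))"
    using assms by (simp add: scalar_prod_def atLeast0LessThan)
  also have "\<dots> = (\<Sum>l<d. \<Sum>p<d. cnj (U $$ (p, i)) * M $$ (p, l) * U $$ (l, j))"
    by (simp add: sum_distrib_right)
  also have "\<dots> = (\<Sum>p<d. \<Sum>l<d. cnj (U $$ (p, i)) * M $$ (p, l) * U $$ (l, j))"
    by (rule sum.swap)
  finally show ?thesis .
qed

definition msum :: "nat \<Rightarrow> nat \<Rightarrow> (nat \<Rightarrow> complex mat) \<Rightarrow> complex mat" where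
  "msum d n A = mat d d (\<lambda>(p,q). \<Sum>i<n. A i $$ (p,q))"

lemma conj_msum: assumes U: "U \<in> carrier_mat d k" and A: "\<And>i. i < n \<Longrightarrow> A i \<in> carrier_mat d d"
  and k: "a < k" "b < k"
  shows "(adj U * msum d n A * U) $$ (a, b) = (\<Sum>i<n. (adj U * A i * U) $$ (a, b))"
proof -
  have ms: "msum d n A \<in> carrier_mat d d" by (simp add: msum_def)
  have "(adj U * msum d n A * U) $$ (a, b) =
     (\<Sum>p<d. \<Sum>l<d. cnj (U $$ (p, a)) * msum d n A $$ (p, l) * U $$ (l, b))"
    by (rule conj_entry[OF U ms k])
  also have "\<dots> = (\<Sum>p<d. \<Sum>l<d. \<Sum>i<n. cnj (U $$ (p, a)) * A i $$ (p, l) * U $$ (l, b))"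
    by (simp add: msum_def sum_distrib_left sum_distrib_right)
  also have "\<dots> = (\<Sum>p<d. \<Sum>i<n. \<Sum>l<d. cnj (U $$ (p, a)) * A i $$ (p, l) * U $$ (l, b))"
    by (rule sum.cong[OF refl], rule sum.swap)
  also have "\<dots> = (\<Sum>i<n. \<Sum>p<d. \<Sum>l<d. cnj (U $$ (p, a)) * A i $$ (p, l) * U $$ (l, b))"
    by (rule sum.swap)
  also have "\<dots> = (\<Sum>i<n. (adj U * A i * U) $$ (a, b))"
    by (intro sum.cong refl, rule conj_entry[OF U A k, symmetric]) auto
  finally show ?thesis .
qed

lemma hermitian_msum: assumes "\<And>i. i < n \<Longrightarrow> hermitian_mat (A i)"
  "\<And>i. i < n \<Longrightarrow> A i \<in> carrier_mat d d"
  shows "hermitian_mat (msum d n A)"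
proof -
  have h: "\<And>i p q. i<n \<Longrightarrow> p<d \<Longrightarrow> q<d \<Longrightarrow> A i $$ (p,q) = cnj (A i $$ (q,p))"
    using assms unfolding hermitian_mat_def by (metis carrier_matD(1))
  show ?thesis unfolding hermitian_mat_def msum_def by (auto simp: cnj_sum intro!: sum.cong h)
qed

lemma psd_conj: assumes M: "M \<in> carrier_mat d d" and U: "U \<in> carrier_mat d k" and P: "psd_mat M"
  shows "psd_mat (adj U * M * U)"
proof -
  have hM: "adj M = M" using P by (intro hermitian_adj) (simp add: psd_mat_def)
  have c: "adj U * M * U \<in> carrier_mat k k" using M U by auto
  have "adj (adj U * M * U) = adj U * adj (adj U * M)"
    using M U by (intro adj_mult[of _ k d _ k]) auto
  also have "adj (adj U * M) = adj M * U" using M U by (simp add: adj_mult[of _ k d _ d])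
  finally have "adj (adj U * M * U) = adj U * (M * U)" using hM by simp
  then have "adj (adj U * M * U) = adj U * M * U"
    using assoc_mult_mat[OF adj_carrier_mat[OF U] M U] by simp
  then have h: "hermitian_mat (adj U * M * U)" using c by (intro adj_hermitian[OF c])
  have "0 \<le> Re (qf (adj U * M * U) v)" if v: "v \<in> carrier_vec k" for v
  proof -
    have Uv: "U *\<^sub>v v \<in> carrier_vec d" using U v by auto
    have "qf (adj U * M * U) v = conjugate v \<bullet> ((adj U * M * U) *\<^sub>v v)"
      by (rule qf_alt[OF c v])
    also have "(adj U * M * U) *\<^sub>v v = adj U *\<^sub>v (M *\<^sub>v (U *\<^sub>v v))"
    proof -
      have aUM: "adj U * M \<in> carrier_mat k d" by (rule mult_carrier_mat[OF adj_carrier_mat[OF U] M])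
      have "(adj U * M * U) *\<^sub>v v = (adj U * M) *\<^sub>v (U *\<^sub>v v)" by (rule assoc_mult_mat_vec[OF aUM U v])
      also have "\<dots> = adj U *\<^sub>v (M *\<^sub>v (U *\<^sub>v v))"
        by (rule assoc_mult_mat_vec[OF adj_carrier_mat[OF U] M Uv])
      finally show ?thesis .
    qed
    also have "conjugate v \<bullet> \<dots> = conjugate (U *\<^sub>v v) \<bullet> (M *\<^sub>v (U *\<^sub>v v))"
      by (rule adj_move[OF U v]) (use M Uv in auto)
    also have "\<dots> = qf M (U *\<^sub>v v)" by (rule qf_alt[OF M Uv, symmetric])
    finally have "qf (adj U * M * U) v = qf M (U *\<^sub>v v)" .
    moreover have "0 \<le> Re (qf M (U *\<^sub>v v))" using P Uv M unfolding psd_qf by auto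
    ultimately show ?thesis by simp
  qed
  then show ?thesis unfolding psd_qf using h c by auto
qed

lemma trace_entry: assumes "A \<in> carrier_mat d k" "B \<in> carrier_mat k d"
  shows "mat_trace (A * B) = (\<Sum>i<d. \<Sum>l<k. A $$ (i, l) * B $$ (l, i))"
  using assms by (simp add: mat_trace_def scalar_prod_def atLeast0LessThan)

lemma trace_comm: assumes "A \<in> carrier_mat d k" "B \<in> carrier_mat k d"
  shows "mat_trace (A * B) = mat_trace (B * A)"
proof -
  have "mat_trace (A * B) = (\<Sum>i<d. \<Sum>l<k. A $$ (i, l) * B $$ (l, i))" by (rule trace_entry[OF assms])
  also have "\<dots> = (\<Sum>l<k. \<Sum>i<d. B $$ (l, i) * A $$ (i, l))"
    by (subst sum.swap) (simp add: mult.commute)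
  also have "\<dots> = mat_trace (B * A)" by (rule trace_entry[OF assms(2,1), symmetric])
  finally show ?thesis .
qed

lemma trace_conj: assumes U: "U \<in> carrier_mat d d" and UU: "U * adj U = 1\<^sub>m d"
  and A: "A \<in> carrier_mat d d" and B: "B \<in> carrier_mat d d"
  shows "mat_trace ((adj U * A * U) * (adj U * B * U)) = mat_trace (A * B)"
proof -
  have aU: "adj U \<in> carrier_mat d d" using U by simp
  have aUA: "adj U * A \<in> carrier_mat d d" using aU A by simp
  have aUB: "adj U * B \<in> carrier_mat d d" using aU B by simp
  have aUBU: "adj U * B * U \<in> carrier_mat d d" using aUB U by simp
  have BU: "B * U \<in> carrier_mat d d" using B U by simp
  have "U * (adj U * B * U) = (U * (adj U * B)) * U" by (rule assoc_mult_mat[OF U aUB U, symmetric])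
  also have "U * (adj U * B) = (U * adj U) * B" by (rule assoc_mult_mat[OF U aU B, symmetric])
  also have "\<dots> = B" using B by (simp add: UU)
  finally have e1: "U * (adj U * B * U) = B * U" .
  have "(adj U * A * U) * (adj U * B * U) = (adj U * A) * (U * (adj U * B * U))"
    by (rule assoc_mult_mat[OF aUA U aUBU])
  also have "\<dots> = (adj U * A) * (B * U)" unfolding e1 ..
  also have "\<dots> = adj U * (A * (B * U))" by (rule assoc_mult_mat[OF aU A BU])
  also have "A * (B * U) = (A * B) * U" by (rule assoc_mult_mat[OF A B U, symmetric])
  finally have e: "(adj U * A * U) * (adj U * B * U) = adj U * ((A * B) * U)" .
  have "mat_trace (adj U * ((A * B) * U)) = mat_trace (((A * B) * U) * adj U)"
    by (rule trace_comm) (use aU A B U in auto)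
  also have "((A * B) * U) * adj U = (A * B) * (U * adj U)"
    by (rule assoc_mult_mat[OF mult_carrier_mat[OF A B] U aU])
  also have "\<dots> = A * B" using A B by (simp add: UU)
  finally show ?thesis unfolding e .
qed

lemma psd_diag: assumes P: "psd_mat P" "P \<in> carrier_mat d d" and k: "k < d"
  shows "P $$ (k,k) = of_real (Re (P $$ (k,k)))" "0 \<le> Re (P $$ (k,k))"
proof -
  have "hermitian_mat P" using P(1) unfolding psd_mat_def by blast
  then have "P $$ (k,k) = cnj (P $$ (k,k))" using P(2) k unfolding hermitian_mat_def by (metis carrier_matD(1))
  then show "P $$ (k,k) = of_real (Re (P $$ (k,k)))" by (metis Reals_cnj_iff complex_is_Real_iff of_real_Re)
  have inner: "(\<Sum>j<d. cnj (unit_vec d k $ i) * P$$(i,j) * unit_vec d k $ j) = (if i = k then P$$(i,k) else 0)"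
    if i: "i < d" for i
  proof -
    have "(\<Sum>j<d. cnj (unit_vec d k $ i) * P$$(i,j) * unit_vec d k $ j) =
      (\<Sum>j<d. if j = k then cnj (unit_vec d k $ i) * P$$(i,j) else 0)" by (rule sum.cong) (use k in auto)
    also have "\<dots> = cnj (unit_vec d k $ i) * P$$(i,k)" using k by simp
    finally show ?thesis using i k by simp
  qed
  have "qf P (unit_vec d k) = (\<Sum>i<d. if i = k then P$$(i,k) else 0)"
    unfolding qf_def using P(2) inner by (intro sum.cong) auto
  also have "\<dots> = P $$ (k,k)" using k by simp
  finally have "qf P (unit_vec d k) = P $$ (k,k)" .
  then show "0 \<le> Re (P $$ (k,k))" using P k unfolding psd_qf by (metis carrier_matD(1) unit_vec_carrier)
qed


lemma sum_two: fixes f :: "nat \<Rightarrow> 'a::comm_monoid_add"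
  assumes "k \<noteq> l" "k < d" "l < d" "\<And>i. i < d \<Longrightarrow> i \<noteq> k \<Longrightarrow> i \<noteq> l \<Longrightarrow> f i = 0"
  shows "(\<Sum>i<d. f i) = f k + f l"
proof -
  have "(\<Sum>i<d. f i) = (\<Sum>i\<in>{k,l}. f i)"
    by (rule sum.mono_neutral_right) (use assms in auto)
  also have "\<dots> = f k + f l" using assms(1) by simp
  finally show ?thesis .
qed

lemma psd_zero_row: assumes P: "psd_mat P" "P \<in> carrier_mat d d" and k: "k < d" and l: "l < d"
  and z: "P $$ (k,k) = 0"
  shows "P $$ (k,l) = 0"
proof (rule ccontr)
  assume a0: "P $$ (k,l) \<noteq> 0"
  define a where "a = P $$ (k,l)"
  have kl: "k \<noteq> l" using a0 z by auto
  have herm: "hermitian_mat P" using P(1) unfolding psd_mat_def by blast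
  have hlk: "P $$ (l,k) = cnj a" unfolding a_def using herm P(2) k l unfolding hermitian_mat_def
    by (metis carrier_matD(1))
  define r where "r = Re (P $$ (l,l))"
  define t where "t = (\<bar>r\<bar> + 1) / (2 * (cmod a)^2)"
  have ca: "cmod a > 0" using a0 a_def by simp
  define x where "x = - (complex_of_real t * a)"
  define v where "v = vec d (\<lambda>i. if i = k then x else if i = l then 1 else (0::complex))"
  have vc: "v \<in> carrier_vec d" by (simp add: v_def)
  have vk: "v $ k = x" and vl: "v $ l = 1" using k l kl by (auto simp: v_def)
  have v0: "i < d \<Longrightarrow> i \<noteq> k \<Longrightarrow> i \<noteq> l \<Longrightarrow> v $ i = 0" for i by (simp add: v_def)
  define g where "g i j = cnj (v $ i) * P $$ (i, j) * v $ j" for i j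
  have inner: "(\<Sum>j<d. g i j) = g i k + g i l" for i
    by (rule sum_two[OF kl k l]) (simp add: g_def v0)
  have "qf P v = (\<Sum>i<d. \<Sum>j<d. g i j)" using P(2) by (simp add: qf_def g_def)
  also have "\<dots> = (\<Sum>j<d. g k j) + (\<Sum>j<d. g l j)"
    by (rule sum_two[OF kl k l]) (simp add: g_def v0)
  also have "\<dots> = g k k + g k l + (g l k + g l l)" unfolding inner ..
  also have "\<dots> = cnj x * a + cnj a * x + P $$ (l,l)"
    by (simp add: g_def vk vl z a_def[symmetric] hlk)
  finally have q: "qf P v = cnj x * a + cnj a * x + P $$ (l,l)" .
  have ca2: "cnj a * a = complex_of_real ((cmod a)^2)" by (subst complex_norm_square) (rule mult.commute)
  have "cnj x * a = - (complex_of_real t * (cnj a * a))" by (simp add: x_def mult_ac)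
  moreover have "cnj a * x = - (complex_of_real t * (cnj a * a))" by (simp add: x_def mult_ac)
  ultimately have "Re (qf P v) = - 2 * t * (cmod a)^2 + r" unfolding q ca2 r_def by simp
  also have "\<dots> = - (\<bar>r\<bar> + 1) + r" unfolding t_def using ca by (simp add: field_simps)
  also have "\<dots> < 0" by simp
  finally have "Re (qf P v) < 0" .
  moreover have "0 \<le> Re (qf P v)" using P vc unfolding psd_qf by auto
  ultimately show False by simp
qed

lemma reindex2:
  fixes f :: "nat \<Rightarrow> nat" and d :: nat
  assumes bij: "bij_betw f {..<a} I" and I: "I \<subseteq> {..<d}"
    and z: "\<And>k l. k < d \<Longrightarrow> l < d \<Longrightarrow> k \<notin> I \<or> l \<notin> I \<Longrightarrow> g k l = (0::'a::comm_monoid_add)"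
  shows "(\<Sum>r<a. \<Sum>c<a. g (f r) (f c)) = (\<Sum>k<d. \<Sum>l<d. g k l)"
proof -
  have "(\<Sum>k<d. \<Sum>l<d. g k l) = (\<Sum>k\<in>I. \<Sum>l<d. g k l)"
  proof (rule sum.mono_neutral_right)
    show "\<forall>k\<in>{..<d} - I. (\<Sum>l<d. g k l) = 0"
    proof
      fix k assume "k \<in> {..<d} - I"
      then show "(\<Sum>l<d. g k l) = 0" by (intro sum.neutral) (use z in auto)
    qed
  qed (use I in auto)
  also have "\<dots> = (\<Sum>k\<in>I. \<Sum>l\<in>I. g k l)"
  proof (rule sum.cong[OF refl])
    fix k assume k: "k \<in> I"
    show "(\<Sum>l<d. g k l) = (\<Sum>l\<in>I. g k l)"
    proof (rule sum.mono_neutral_right)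
      show "\<forall>l\<in>{..<d} - I. g k l = 0" using z k I by auto
    qed (use I in auto)
  qed
  also have "\<dots> = (\<Sum>r<a. \<Sum>l\<in>I. g (f r) l)"
    by (rule sum.reindex_bij_betw[OF bij, symmetric])
  also have "\<dots> = (\<Sum>r<a. \<Sum>c<a. g (f r) (f c))"
    by (rule sum.cong[OF refl], rule sum.reindex_bij_betw[OF bij, symmetric])
  finally show ?thesis by simp
qed

lemma restrict_family:
  assumes I: "I \<subseteq> {..<d}" and A: "\<And>i. i < n \<Longrightarrow> A i \<in> carrier_mat d d \<and> psd_mat (A i)"
   and z: "\<And>i k l. i < n \<Longrightarrow> k < d \<Longrightarrow> l < d \<Longrightarrow> k \<notin> I \<or> l \<notin> I \<Longrightarrow> A i $$ (k,l) = 0"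
  shows "\<exists>P. (\<forall>i<n. P i \<in> carrier_mat (card I) (card I) \<and> psd_mat (P i)) \<and>
             (\<forall>i<n. \<forall>j<n. mat_trace (P i * P j) = mat_trace (A i * A j))"
proof -
  have fin: "finite I" using I finite_subset by blast
  from ex_bij_betw_nat_finite[OF fin] obtain f where bij: "bij_betw f {..<card I} I"
    by (auto simp: atLeast0LessThan)
  define a where "a = card I"
  have bij': "bij_betw f {..<a} I" using bij a_def by simp
  have inj: "inj_on f {..<a}" using bij' by (rule bij_betw_imp_inj_on)
  have fI: "r < a \<Longrightarrow> f r \<in> I" for r using bij' by (auto dest: bij_betw_apply)
  have fd: "r < a \<Longrightarrow> f r < d" for r using fI I by auto
  define P where "P i = mat a a (\<lambda>(r,c). A i $$ (f r, f c))" for i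
  have Pc: "P i \<in> carrier_mat a a" for i by (simp add: P_def)
  have herm: "A i $$ (p,q) = cnj (A i $$ (q,p))" if "i < n" "p < d" "q < d" for i p q
  proof -
    have "hermitian_mat (A i)" using A[OF that(1)] unfolding psd_mat_def by blast
    then show ?thesis using A[OF that(1)] that unfolding hermitian_mat_def by (metis carrier_matD(1))
  qed
  have psdP: "psd_mat (P i)" if i: "i < n" for i
  proof -
    have h: "hermitian_mat (P i)" unfolding hermitian_mat_def P_def
      by (auto intro!: herm[OF i] fd)
    have "0 \<le> Re (qf (P i) v)" if v: "v \<in> carrier_vec a" for v
    proof -
      define g where "g = the_inv_into {..<a} f"
      have gf: "r < a \<Longrightarrow> g (f r) = r" for r unfolding g_def using inj by (simp add: the_inv_into_f_f)
      define w where "w = vec d (\<lambda>k. if k \<in> I then v $ g k else 0)"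
      have wc: "w \<in> carrier_vec d" by (simp add: w_def)
      have wf: "r < a \<Longrightarrow> w $ f r = v $ r" for r using fI fd gf by (simp add: w_def)
      define G where "G k l = cnj (w $ k) * A i $$ (k, l) * w $ l" for k l
      have "qf (P i) v = (\<Sum>r<a. \<Sum>c<a. G (f r) (f c))"
        unfolding qf_def G_def using Pc by (simp add: P_def wf)
      also have "\<dots> = (\<Sum>k<d. \<Sum>l<d. G k l)"
        by (rule reindex2[OF bij' I]) (auto simp: G_def w_def)
      also have "\<dots> = qf (A i) w" unfolding qf_def G_def
        using carrier_matD(1)[of "A i" d d] A[OF i] by simp
      finally have "qf (P i) v = qf (A i) w" .
      moreover have "0 \<le> Re (qf (A i) w)" using A[OF i] wc unfolding psd_qf by auto
      ultimately show ?thesis by simp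
    qed
    then show ?thesis unfolding psd_qf using h by (auto simp: P_def)
  qed
  have tr: "mat_trace (P i * P j) = mat_trace (A i * A j)" if i: "i < n" and j: "j < n" for i j
  proof -
    have "mat_trace (P i * P j) = (\<Sum>r<a. \<Sum>c<a. P i $$ (r,c) * P j $$ (c,r))"
      by (rule trace_entry[OF Pc Pc])
    also have "\<dots> = (\<Sum>r<a. \<Sum>c<a. A i $$ (f r, f c) * A j $$ (f c, f r))"
      by (simp add: P_def)
    also have "\<dots> = (\<Sum>k<d. \<Sum>l<d. A i $$ (k, l) * A j $$ (l, k))"
      by (rule reindex2[OF bij' I, where g = "\<lambda>k l. A i $$ (k, l) * A j $$ (l, k)"])
        (use z i in auto)
    also have "\<dots> = mat_trace (A i * A j)"
      by (rule trace_entry[symmetric]) (use A i j in auto)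
    finally show ?thesis .
  qed
  show ?thesis using Pc psdP tr unfolding a_def by blast
qed


definition emb :: "(nat \<Rightarrow> nat) \<Rightarrow> nat \<Rightarrow> nat \<Rightarrow> complex mat \<Rightarrow> complex mat" where
  "emb f a D P = mat D D (\<lambda>(k,l). if k \<in> f ` {..<a} \<and> l \<in> f ` {..<a}
      then P $$ (the_inv_into {..<a} f k, the_inv_into {..<a} f l) else 0)"

lemma emb_carrier[simp]: "emb f a D P \<in> carrier_mat D D"
  by (simp add: emb_def)

lemma emb_entry: assumes inj: "inj_on f {..<a}" and im: "f ` {..<a} \<subseteq> {..<D}"
  and r: "r < a" and c: "c < a"
  shows "emb f a D P $$ (f r, f c) = P $$ (r, c)"
proof -
  have "f r < D" "f c < D" using im r c by auto
  then show ?thesis using r c inj by (simp add: emb_def the_inv_into_f_f)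
qed

lemma emb_zero: assumes "k < D" "l < D" "k \<notin> f ` {..<a} \<or> l \<notin> f ` {..<a}"
  shows "emb f a D P $$ (k, l) = 0"
  using assms by (auto simp: emb_def)

lemma emb_reindex:
  fixes f :: "nat \<Rightarrow> nat" and a D :: nat
  assumes inj: "inj_on f {..<a}" and im: "f ` {..<a} \<subseteq> {..<D}"
    and z: "\<And>k l. k < D \<Longrightarrow> l < D \<Longrightarrow> k \<notin> f ` {..<a} \<or> l \<notin> f ` {..<a} \<Longrightarrow> g k l = (0::complex)"
  shows "(\<Sum>k<D. \<Sum>l<D. g k l) = (\<Sum>r<a. \<Sum>c<a. g (f r) (f c))"
proof -
  have "(\<Sum>r<a. \<Sum>c<a. g (f r) (f c)) = (\<Sum>k<D. \<Sum>l<D. g k l)"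
    by (rule reindex2[OF inj_on_imp_bij_betw[OF inj] im]) (use z in blast)
  then show ?thesis by simp
qed

lemma emb_psd: assumes inj: "inj_on f {..<a}" and im: "f ` {..<a} \<subseteq> {..<D}"
  and P: "P \<in> carrier_mat a a" "psd_mat P"
  shows "psd_mat (emb f a D P)"
proof -
  have herm: "P $$ (r,c) = cnj (P $$ (c,r))" if "r < a" "c < a" for r c
  proof -
    have "hermitian_mat P" using P(2) unfolding psd_mat_def by blast
    then show ?thesis using P(1) that unfolding hermitian_mat_def by (metis carrier_matD(1))
  qed
  have h: "hermitian_mat (emb f a D P)"
    unfolding hermitian_mat_def
  proof (intro conjI allI impI)
    fix k l assume k: "k < dim_row (emb f a D P)" and l: "l < dim_row (emb f a D P)"
    then have k: "k < D" and l: "l < D" by (auto simp: emb_def)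
    show "emb f a D P $$ (k, l) = cnj (emb f a D P $$ (l, k))"
    proof (cases "k \<in> f ` {..<a} \<and> l \<in> f ` {..<a}")
      case True
      then obtain r c where r: "r < a" "k = f r" and c: "c < a" "l = f c" by auto
      show ?thesis unfolding r(2) c(2) emb_entry[OF inj im r(1) c(1)] emb_entry[OF inj im c(1) r(1)]
        by (rule herm[OF r(1) c(1)])
    next
      case False
      then show ?thesis using emb_zero[of k D l f a P] emb_zero[of l D k f a P] k l by auto
    qed
  qed (simp add: emb_def)
  have "0 \<le> Re (qf (emb f a D P) w)" if w: "w \<in> carrier_vec D" for w
  proof -
    define v where "v = vec a (\<lambda>r. w $ f r)"
    have vc: "v \<in> carrier_vec a" by (simp add: v_def)
    have "qf (emb f a D P) w = (\<Sum>k<D. \<Sum>l<D. cnj (w $ k) * emb f a D P $$ (k, l) * w $ l)"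
      by (simp add: qf_def emb_def)
    also have "\<dots> = (\<Sum>r<a. \<Sum>c<a. cnj (w $ f r) * emb f a D P $$ (f r, f c) * w $ f c)"
      by (rule emb_reindex[OF inj im]) (simp add: emb_zero)
    also have "\<dots> = qf P v"
      unfolding qf_def using P(1) by (simp add: v_def emb_entry[OF inj im])
    finally have "qf (emb f a D P) w = qf P v" .
    moreover have "0 \<le> Re (qf P v)" using P vc unfolding psd_qf by auto
    ultimately show ?thesis by simp
  qed
  then show ?thesis unfolding psd_qf using h by (simp add: emb_def)
qed

lemma emb_trace: assumes inj: "inj_on f {..<a}" and im: "f ` {..<a} \<subseteq> {..<D}"
  and P: "P \<in> carrier_mat a a" and Q: "Q \<in> carrier_mat a a"
  shows "mat_trace (emb f a D P * emb f a D Q) = mat_trace (P * Q)"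
proof -
  have "mat_trace (emb f a D P * emb f a D Q) = (\<Sum>k<D. \<Sum>l<D. emb f a D P $$ (k,l) * emb f a D Q $$ (l,k))"
    by (rule trace_entry) auto
  also have "\<dots> = (\<Sum>r<a. \<Sum>c<a. emb f a D P $$ (f r, f c) * emb f a D Q $$ (f c, f r))"
    by (rule emb_reindex[OF inj im]) (auto simp: emb_zero)
  also have "\<dots> = (\<Sum>r<a. \<Sum>c<a. P $$ (r, c) * Q $$ (c, r))"
    by (simp add: emb_entry[OF inj im])
  also have "\<dots> = mat_trace (P * Q)" by (rule trace_entry[symmetric, OF P Q])
  finally show ?thesis .
qed

lemma emb_trace0: assumes disj: "f ` {..<a} \<inter> g ` {..<b} = {}"
  shows "mat_trace (emb f a D P * emb g b D Q) = 0"
proof -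
  have "mat_trace (emb f a D P * emb g b D Q) = (\<Sum>k<D. \<Sum>l<D. emb f a D P $$ (k,l) * emb g b D Q $$ (l,k))"
    by (rule trace_entry) auto
  also have "\<dots> = 0"
  proof (intro sum.neutral ballI)
    fix k l assume k: "k \<in> {..<D}" and l: "l \<in> {..<D}"
    show "emb f a D P $$ (k,l) * emb g b D Q $$ (l,k) = 0"
    proof (cases "k \<in> f ` {..<a}")
      case True
      then have "k \<notin> g ` {..<b}" using disj by auto
      then show ?thesis using emb_zero[of l D k g b Q] k l by auto
    next
      case False
      then show ?thesis using emb_zero[of k D l f a P] k l by auto
    qed
  qed
  finally show ?thesis .
qed

lemma upper:
  assumes X: "X \<in> carrier_mat n n" and Y: "Y \<in> carrier_mat m m"
    and fX: "cpsd_factorizable a X" and fY: "cpsd_factorizable b Y"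
  shows "cpsd_factorizable (a + b) (four_block_mat X (0\<^sub>m n m) (0\<^sub>m m n) Y)"
proof -
  from fX obtain P where P: "\<forall>i < n. P i \<in> carrier_mat a a \<and> psd_mat (P i)"
    "\<forall>i < n. \<forall>j < n. complex_of_real (X $$ (i, j)) = mat_trace (P i * P j)"
    using X unfolding cpsd_factorizable_def by auto
  from fY obtain Q where Q: "\<forall>i < m. Q i \<in> carrier_mat b b \<and> psd_mat (Q i)"
    "\<forall>i < m. \<forall>j < m. complex_of_real (Y $$ (i, j)) = mat_trace (Q i * Q j)"
    using Y unfolding cpsd_factorizable_def by auto
  define f1 where "f1 = (\<lambda>r::nat. r)"
  define f2 where "f2 = (\<lambda>r::nat. r + a)"
  have inj1: "inj_on f1 {..<a}" by (simp add: f1_def)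
  have inj2: "inj_on f2 {..<b}" by (simp add: f2_def inj_on_def)
  have im1: "f1 ` {..<a} \<subseteq> {..<a+b}" by (auto simp: f1_def)
  have im2: "f2 ` {..<b} \<subseteq> {..<a+b}" by (auto simp: f2_def)
  have disj: "f1 ` {..<a} \<inter> f2 ` {..<b} = {}" by (auto simp: f1_def f2_def)
  have disj': "f2 ` {..<b} \<inter> f1 ` {..<a} = {}" using disj by auto
  define R where "R i = (if i < n then emb f1 a (a+b) (P i) else emb f2 b (a+b) (Q (i - n)))" for i
  define Z where "Z = four_block_mat X (0\<^sub>m n m) (0\<^sub>m m n) Y"
  have dZ: "dim_row Z = n + m" using X Y by (simp add: Z_def)
  have Rp: "R i \<in> carrier_mat (a+b) (a+b) \<and> psd_mat (R i)" if "i < n + m" for i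
  proof (cases "i < n")
    case True then show ?thesis using P(1) emb_psd[OF inj1 im1] by (simp add: R_def)
  next
    case False then have "i - n < m" using that by simp
    then show ?thesis using False Q(1) emb_psd[OF inj2 im2] by (simp add: R_def)
  qed
  have Rt: "complex_of_real (Z $$ (i, j)) = mat_trace (R i * R j)" if i: "i < n + m" and j: "j < n + m" for i j
  proof (cases "i < n")
    case True
    show ?thesis
    proof (cases "j < n")
      case True
      then show ?thesis using \<open>i < n\<close> X Y P emb_trace[OF inj1 im1] by (simp add: R_def Z_def)
    next
      case False
      then show ?thesis using \<open>i < n\<close> j X Y emb_trace0[OF disj] by (simp add: R_def Z_def)
    qed
  next
    case False
    then have i': "i - n < m" using i by simp
    show ?thesis
    proof (cases "j < n")
      case True
      then show ?thesis using False i X Y emb_trace0[OF disj'] by (simp add: R_def Z_def)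
    next
      case False
      then have j': "j - n < m" using j by simp
      then show ?thesis using \<open>\<not> i < n\<close> False i' X Y Q emb_trace[OF inj2 im2] by (simp add: R_def Z_def)
    qed
  qed
  show ?thesis unfolding cpsd_factorizable_def Z_def[symmetric] dZ
    using Rp Rt by blast
qed


lemma fact0: assumes X: "X \<in> carrier_mat n n" and f: "cpsd_factorizable 0 X"
  shows "X = 0\<^sub>m n n"
proof -
  from f obtain P where P: "\<forall>i < n. P i \<in> carrier_mat 0 0 \<and> psd_mat (P i)"
    "\<forall>i < n. \<forall>j < n. complex_of_real (X $$ (i, j)) = mat_trace (P i * P j)"
    using X unfolding cpsd_factorizable_def by auto
  show ?thesis
  proof (rule eq_matI)
    fix i j assume i: "i < dim_row (0\<^sub>m n n :: real mat)" and j: "j < dim_col (0\<^sub>m n n :: real mat)"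
    then have i: "i < n" and j: "j < n" by auto
    have "complex_of_real (X $$ (i, j)) = mat_trace (P i * P j)" using P(2) i j by auto
    also have "\<dots> = 0"
    proof -
      have "P i \<in> carrier_mat 0 0" using P(1) i by blast
      then show ?thesis by (simp add: mat_trace_def)
    qed
    finally show "X $$ (i, j) = 0\<^sub>m n n $$ (i, j)" using i j by simp
  qed (use X in auto)
qed

lemma sum4:
  fixes a :: "nat \<Rightarrow> nat \<Rightarrow> nat \<Rightarrow> complex" and b :: "nat \<Rightarrow> nat \<Rightarrow> nat \<Rightarrow> complex"
  shows "(\<Sum>k<d. \<Sum>l<d. (\<Sum>i<n. a i k l) * (\<Sum>j<m. b j l k)) =
         (\<Sum>i<n. \<Sum>j<m. \<Sum>k<d. \<Sum>l<d. a i k l * b j l k)"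
proof -
  have "(\<Sum>k<d. \<Sum>l<d. (\<Sum>i<n. a i k l) * (\<Sum>j<m. b j l k)) =
        (\<Sum>k<d. \<Sum>l<d. \<Sum>i<n. \<Sum>j<m. a i k l * b j l k)"
    by (simp add: sum_product)
  also have "\<dots> = (\<Sum>k<d. \<Sum>i<n. \<Sum>l<d. \<Sum>j<m. a i k l * b j l k)"
    by (rule sum.cong[OF refl], rule sum.swap)
  also have "\<dots> = (\<Sum>i<n. \<Sum>k<d. \<Sum>l<d. \<Sum>j<m. a i k l * b j l k)"
    by (rule sum.swap)
  also have "\<dots> = (\<Sum>i<n. \<Sum>k<d. \<Sum>j<m. \<Sum>l<d. a i k l * b j l k)"
    by (rule sum.cong[OF refl], rule sum.cong[OF refl], rule sum.swap)
  also have "\<dots> = (\<Sum>i<n. \<Sum>j<m. \<Sum>k<d. \<Sum>l<d. a i k l * b j l k)"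
    by (rule sum.cong[OF refl], rule sum.swap)
  finally show ?thesis .
qed

lemma zero_from_diag: assumes P: "psd_mat P" "P \<in> carrier_mat d d" and k: "k < d" and l: "l < d"
  and z: "Re (P $$ (k,k)) = 0"
  shows "P $$ (k,l) = 0" "P $$ (l,k) = 0"
proof -
  have kk: "P $$ (k,k) = 0" using psd_diag(1)[OF P k] z by simp
  show "P $$ (k,l) = 0" by (rule psd_zero_row[OF P k l kk])
  have "hermitian_mat P" using P(1) unfolding psd_mat_def by blast
  then have "P $$ (l,k) = cnj (P $$ (k,l))" using P(2) k l unfolding hermitian_mat_def
    by (metis carrier_matD(1))
  then show "P $$ (l,k) = 0" using psd_zero_row[OF P k l kk] by simp
qed

lemma lower:
  assumes X: "X \<in> carrier_mat n n" and Y: "Y \<in> carrier_mat m m"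
    and fZ: "cpsd_factorizable d (four_block_mat X (0\<^sub>m n m) (0\<^sub>m m n) Y)"
  shows "\<exists>a b. a + b \<le> d \<and> cpsd_factorizable a X \<and> cpsd_factorizable b Y"
proof -
  define Z where "Z = four_block_mat X (0\<^sub>m n m) (0\<^sub>m m n) Y"
  have dZ: "dim_row Z = n + m" using X Y by (simp add: Z_def)
  from fZ obtain R where R: "\<forall>i < n + m. R i \<in> carrier_mat d d \<and> psd_mat (R i)"
    and Rt: "\<forall>i < n + m. \<forall>j < n + m. complex_of_real (Z $$ (i, j)) = mat_trace (R i * R j)"
    unfolding cpsd_factorizable_def Z_def[symmetric] dZ by blast
  have Rc: "R i \<in> carrier_mat d d" "psd_mat (R i)" if "i < n + m" for i using R that by auto
  have Rt': "complex_of_real (Z $$ (i, j)) = mat_trace (R i * R j)" if "i < n + m" "j < n + m" for i j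
    using Rt that by blast
  have AB0: "mat_trace (R i * R (n + j)) = 0" if "i < n" "j < m" for i j
  proof -
    have "Z $$ (i, n + j) = 0" using X Y that by (simp add: Z_def)
    then show ?thesis using Rt'[of i "n + j"] that by simp
  qed
  have XR: "complex_of_real (X $$ (i, j)) = mat_trace (R i * R j)" if "i < n" "j < n" for i j
  proof -
    have "Z $$ (i, j) = X $$ (i, j)" using X Y that by (simp add: Z_def)
    then show ?thesis using Rt'[of i j] that by simp
  qed
  have YR: "complex_of_real (Y $$ (i, j)) = mat_trace (R (n + i) * R (n + j))" if "i < m" "j < m" for i j
  proof -
    have "Z $$ (n + i, n + j) = Y $$ (i, j)" using X Y that by (simp add: Z_def)
    then show ?thesis using Rt'[of "n + i" "n + j"] that by simp
  qed
  define S where "S = msum d n R"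
  define T where "T = msum d m (\<lambda>j. R (n + j))"
  have Sc: "S \<in> carrier_mat d d" and Tc: "T \<in> carrier_mat d d" by (auto simp: S_def T_def msum_def)
  have hS: "hermitian_mat S" unfolding S_def
    by (rule hermitian_msum) (use Rc in \<open>auto simp: psd_mat_def\<close>)
  from spectral[OF Sc hS] obtain U where U: "U \<in> carrier_mat d d" "adj U * U = 1\<^sub>m d"
    "U * adj U = 1\<^sub>m d" "diagonal_mat (adj U * S * U)" by blast
  define A' where "A' i = adj U * R i * U" for i
  define B' where "B' j = adj U * R (n + j) * U" for j
  have cc: "adj U * M * U \<in> carrier_mat d d" if "M \<in> carrier_mat d d" for M
    by (rule mult_carrier_mat[OF mult_carrier_mat[OF adj_carrier_mat[OF U(1)] that] U(1)])
  have A'c: "A' i \<in> carrier_mat d d \<and> psd_mat (A' i)" if "i < n" for i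
    using Rc[of i] that psd_conj[of "R i" d U d] U(1) cc[of "R i"] by (simp add: A'_def)
  have B'c: "B' j \<in> carrier_mat d d \<and> psd_mat (B' j)" if "j < m" for j
    using Rc[of "n + j"] that psd_conj[of "R (n + j)" d U d] U(1) cc[of "R (n + j)"] by (simp add: B'_def)
  have A'tr: "mat_trace (A' i * A' k) = mat_trace (R i * R k)" if "i < n" "k < n" for i k
    unfolding A'_def by (rule trace_conj[OF U(1) U(3)]) (use Rc that in auto)
  have B'tr: "mat_trace (B' i * B' k) = mat_trace (R (n + i) * R (n + k))" if "i < m" "k < m" for i k
    unfolding B'_def by (rule trace_conj[OF U(1) U(3)]) (use Rc that in auto)
  define s where "s k = (\<Sum>i<n. Re (A' i $$ (k,k)))" for k
  define t where "t k = (\<Sum>j<m. Re (B' j $$ (k,k)))" for k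
  have Sd: "(adj U * S * U) $$ (k,l) = (\<Sum>i<n. A' i $$ (k,l))" if "k < d" "l < d" for k l
    unfolding S_def A'_def by (rule conj_msum[OF U(1)]) (use Rc that in auto)
  have Td: "(adj U * T * U) $$ (k,l) = (\<Sum>j<m. B' j $$ (k,l))" if "k < d" "l < d" for k l
    unfolding T_def B'_def by (rule conj_msum[OF U(1)]) (use Rc that in auto)
  have Sdd: "(adj U * S * U) $$ (k,k) = complex_of_real (s k)" if k: "k < d" for k
  proof -
    have "(adj U * S * U) $$ (k,k) = (\<Sum>i<n. A' i $$ (k,k))" by (rule Sd[OF k k])
    also have "\<dots> = (\<Sum>i<n. complex_of_real (Re (A' i $$ (k,k))))"
      by (rule sum.cong[OF refl]) (use A'c psd_diag(1) k in auto)
    also have "\<dots> = complex_of_real (s k)" by (simp add: s_def of_real_sum)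
    finally show ?thesis .
  qed
  have Tdd: "(adj U * T * U) $$ (k,k) = complex_of_real (t k)" if k: "k < d" for k
  proof -
    have "(adj U * T * U) $$ (k,k) = (\<Sum>j<m. B' j $$ (k,k))" by (rule Td[OF k k])
    also have "\<dots> = (\<Sum>j<m. complex_of_real (Re (B' j $$ (k,k))))"
      by (rule sum.cong[OF refl]) (use B'c psd_diag(1) k in auto)
    also have "\<dots> = complex_of_real (t k)" by (simp add: t_def of_real_sum)
    finally show ?thesis .
  qed
  have s0: "0 \<le> s k" if "k < d" for k unfolding s_def
    by (rule sum_nonneg) (use A'c psd_diag(2) that in auto)
  have t0: "0 \<le> t k" if "k < d" for k unfolding t_def
    by (rule sum_nonneg) (use B'c psd_diag(2) that in auto)
  have SUc: "adj U * S * U \<in> carrier_mat d d" by (rule cc[OF Sc])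
  have TUc: "adj U * T * U \<in> carrier_mat d d" by (rule cc[OF Tc])
  have offd: "(adj U * S * U) $$ (k,l) = 0" if "k < d" "l < d" "k \<noteq> l" for k l
    using U(4) SUc that unfolding diagonal_mat_def by auto
  have "complex_of_real (\<Sum>k<d. s k * t k) = (\<Sum>k<d. (adj U * S * U) $$ (k,k) * (adj U * T * U) $$ (k,k))"
    by (simp add: of_real_sum Sdd Tdd)
  also have "\<dots> = (\<Sum>k<d. \<Sum>l<d. (adj U * S * U) $$ (k,l) * (adj U * T * U) $$ (l,k))"
  proof (rule sum.cong[OF refl])
    fix k assume k: "k \<in> {..<d}"
    have "(\<Sum>l<d. (adj U * S * U) $$ (k,l) * (adj U * T * U) $$ (l,k)) =
          (\<Sum>l<d. if l = k then (adj U * S * U) $$ (k,l) * (adj U * T * U) $$ (l,k) else 0)"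
      by (rule sum.cong[OF refl]) (use offd k in auto)
    also have "\<dots> = (adj U * S * U) $$ (k,k) * (adj U * T * U) $$ (k,k)" using k by simp
    finally show "(adj U * S * U) $$ (k,k) * (adj U * T * U) $$ (k,k) =
          (\<Sum>l<d. (adj U * S * U) $$ (k,l) * (adj U * T * U) $$ (l,k))" by simp
  qed
  also have "\<dots> = mat_trace ((adj U * S * U) * (adj U * T * U))"
    by (rule trace_entry[OF SUc TUc, symmetric])
  also have "\<dots> = mat_trace (S * T)" by (rule trace_conj[OF U(1) U(3) Sc Tc])
  also have "\<dots> = (\<Sum>k<d. \<Sum>l<d. S $$ (k,l) * T $$ (l,k))" by (rule trace_entry[OF Sc Tc])
  also have "\<dots> = (\<Sum>k<d. \<Sum>l<d. (\<Sum>i<n. R i $$ (k,l)) * (\<Sum>j<m. R (n + j) $$ (l,k)))"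
    by (simp add: S_def T_def msum_def)
  also have "\<dots> = (\<Sum>i<n. \<Sum>j<m. \<Sum>k<d. \<Sum>l<d. R i $$ (k,l) * R (n + j) $$ (l,k))"
    by (rule sum4)
  also have "\<dots> = (\<Sum>i<n. \<Sum>j<m. mat_trace (R i * R (n + j)))"
    by (intro sum.cong refl trace_entry[symmetric]) (use Rc in auto)
  also have "\<dots> = 0" by (simp add: AB0)
  finally have "complex_of_real (\<Sum>k<d. s k * t k) = 0" .
  then have "(\<Sum>k<d. s k * t k) = 0" by (simp only: of_real_eq_0_iff)
  then have st: "s k * t k = 0" if "k < d" for k
    using sum_nonneg_eq_0_iff[of "{..<d}" "\<lambda>k. s k * t k"] s0 t0 that by auto
  define I where "I = {k. k < d \<and> s k \<noteq> 0}"
  define J where "J = {k. k < d \<and> t k \<noteq> 0}"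
  have IJ: "I \<inter> J = {}" using st by (auto simp: I_def J_def)
  have Id: "I \<subseteq> {..<d}" and Jd: "J \<subseteq> {..<d}" by (auto simp: I_def J_def)
  have "card I + card J = card (I \<union> J)"
    by (rule card_Un_disjoint[symmetric]) (use IJ finite_subset[OF Id] finite_subset[OF Jd] in auto)
  also have "\<dots> \<le> card {..<d}" by (rule card_mono) (use Id Jd in auto)
  finally have card: "card I + card J \<le> d" by simp
  have sA: "Re (A' i $$ (k,k)) = 0" if "i < n" "k < d" "k \<notin> I" for i k
  proof -
    have "s k = 0" using that by (auto simp: I_def)
    then show ?thesis
      using sum_nonneg_eq_0_iff[of "{..<n}" "\<lambda>i. Re (A' i $$ (k,k))"] A'c psd_diag(2) that
      unfolding s_def by auto
  qed
  have tB: "Re (B' j $$ (k,k)) = 0" if "j < m" "k < d" "k \<notin> J" for j k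
  proof -
    have "t k = 0" using that by (auto simp: J_def)
    then show ?thesis
      using sum_nonneg_eq_0_iff[of "{..<m}" "\<lambda>j. Re (B' j $$ (k,k))"] B'c psd_diag(2) that
      unfolding t_def by auto
  qed
  have zA: "A' i $$ (k,l) = 0" if "i < n" "k < d" "l < d" "k \<notin> I \<or> l \<notin> I" for i k l
  proof -
    have P: "psd_mat (A' i)" "A' i \<in> carrier_mat d d" using A'c that(1) by auto
    show ?thesis using that(4)
    proof
      assume "k \<notin> I" then show ?thesis using zero_from_diag(1)[OF P that(2,3)] sA that by auto
    next
      assume "l \<notin> I" then show ?thesis using zero_from_diag(2)[OF P that(3,2)] sA that by auto
    qed
  qed
  have zB: "B' j $$ (k,l) = 0" if "j < m" "k < d" "l < d" "k \<notin> J \<or> l \<notin> J" for j k l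
  proof -
    have P: "psd_mat (B' j)" "B' j \<in> carrier_mat d d" using B'c that(1) by auto
    show ?thesis using that(4)
    proof
      assume "k \<notin> J" then show ?thesis using zero_from_diag(1)[OF P that(2,3)] tB that by auto
    next
      assume "l \<notin> J" then show ?thesis using zero_from_diag(2)[OF P that(3,2)] tB that by auto
    qed
  qed
  obtain P where P: "\<forall>i<n. P i \<in> carrier_mat (card I) (card I) \<and> psd_mat (P i)"
    "\<forall>i<n. \<forall>j<n. mat_trace (P i * P j) = mat_trace (A' i * A' j)"
    using restrict_family[OF Id, of n A'] A'c zA by blast
  obtain Q where Q: "\<forall>i<m. Q i \<in> carrier_mat (card J) (card J) \<and> psd_mat (Q i)"
    "\<forall>i<m. \<forall>j<m. mat_trace (Q i * Q j) = mat_trace (B' i * B' j)"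
    using restrict_family[OF Jd, of m B'] B'c zB by blast
  have fX: "cpsd_factorizable (card I) X"
    unfolding cpsd_factorizable_def
    by (rule exI[of _ P]) (use X P A'tr XR in auto)
  have fY: "cpsd_factorizable (card J) Y"
    unfolding cpsd_factorizable_def
    by (rule exI[of _ Q]) (use Y Q B'tr YR in auto)
  show ?thesis using card fX fY by blast
qed

theorem lemma3p6:
  fixes X Y :: "real mat" and n m :: nat
  assumes "X \<in> carrier_mat n n" and "Y \<in> carrier_mat m m"
    and "cpsd X" and "cpsd Y"
    and "X \<noteq> 0\<^sub>m n n" and "Y \<noteq> 0\<^sub>m m m"
  shows "cpsd (four_block_mat X (0\<^sub>m n m) (0\<^sub>m m n) Y) \<and>
         cpsd_rank (four_block_mat X (0\<^sub>m n m) (0\<^sub>m m n) Y) = cpsd_rank X + cpsd_rank Y"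
proof -
  note X = assms(1) and Y = assms(2)
  define Z where "Z = four_block_mat X (0\<^sub>m n m) (0\<^sub>m m n) Y"
  have rX: "cpsd_rank X \<ge> 1 \<and> cpsd_factorizable (cpsd_rank X) X"
    using assms(3) unfolding cpsd_def cpsd_rank_def by (metis (mono_tags, lifting) LeastI)
  have rY: "cpsd_rank Y \<ge> 1 \<and> cpsd_factorizable (cpsd_rank Y) Y"
    using assms(4) unfolding cpsd_def cpsd_rank_def by (metis (mono_tags, lifting) LeastI)
  have fZ: "cpsd_factorizable (cpsd_rank X + cpsd_rank Y) Z"
    unfolding Z_def by (rule upper[OF X Y]) (use rX rY in auto)
  have cZ: "cpsd Z" unfolding cpsd_def
  proof
    show "dim_row Z = dim_col Z" using X Y by (simp add: Z_def)
    show "\<exists>d\<ge>1. cpsd_factorizable d Z" using fZ rX by (intro exI[of _ "cpsd_rank X + cpsd_rank Y"]) auto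
  qed
  have le1: "cpsd_rank Z \<le> cpsd_rank X + cpsd_rank Y"
    unfolding cpsd_rank_def[of Z] by (rule Least_le) (use fZ rX in auto)
  have rZ: "cpsd_rank Z \<ge> 1 \<and> cpsd_factorizable (cpsd_rank Z) Z"
    unfolding cpsd_rank_def[of Z] by (rule LeastI[of _ "cpsd_rank X + cpsd_rank Y"]) (use fZ rX in auto)
  from lower[OF X Y, of "cpsd_rank Z"] rZ obtain a b where
    ab: "a + b \<le> cpsd_rank Z" "cpsd_factorizable a X" "cpsd_factorizable b Y"
    unfolding Z_def by blast
  have a1: "a \<ge> 1"
  proof (rule ccontr)
    assume "\<not> 1 \<le> a" then have "a = 0" by simp
    then have "X = 0\<^sub>m n n" using fact0[OF X] ab(2) by simp
    then show False using assms(5) by simp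
  qed
  have b1: "b \<ge> 1"
  proof (rule ccontr)
    assume "\<not> 1 \<le> b" then have "b = 0" by simp
    then have "Y = 0\<^sub>m m m" using fact0[OF Y] ab(3) by simp
    then show False using assms(6) by simp
  qed
  have "cpsd_rank X \<le> a" unfolding cpsd_rank_def[of X] by (rule Least_le) (use a1 ab in auto)
  moreover have "cpsd_rank Y \<le> b" unfolding cpsd_rank_def[of Y] by (rule Least_le) (use b1 ab in auto)
  ultimately have "cpsd_rank X + cpsd_rank Y \<le> cpsd_rank Z" using ab(1) by simp
  then show ?thesis using le1 cZ unfolding Z_def by simp
qed


end
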